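(* Let $F$ be a posheaf on a locale $X$ such that for all $v\le u$ in $\mathcal{O}(X)$ the restriction map $F(u)\to F(v)$ is surjective and has a left adjoint $l_{v,u}:F(v)\to F(u)$. Then for all $u,v\in\mathcal{O}(X)$ and all $x\in F(v)$, $$\big(l_{v,\,u\vee v}(x)\big)|_u=l_{u\wedge v,\,u}\big(x|_{u\wedge v}\big).$$
   Context: Let $X$ be a locale with frame of opens $\mathcal{O}(X)$. A posheaf on $X$ is a sheaf of sets $F$ with (POS1) each $F(u)$ a poset; (POS2) restriction maps $F(u)\to F(v)$, $x\mapsto x|_v$ ($v\le u$), order-preserving; (POS3) if $u=\bigvee_i u_i$ and $s,t\in F(u)$ satisfy $s|_{u_i}\le t|_{u_i}$ for all $i$, then $s\le t$. A left adjoint of the restriction map $F(u)\to F(v)$ is a monotone map $l_{v,u}:F(v)\to F(u)$ with $l_{v,u}(x)\le y\iff x\le y|_v$ for $x\in F(v)$, $y\in F(u)$. *)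

theory Defs
  imports Main
begin

text \<open>A frame: a complete lattice satisfying the infinite distributive law.
  A locale X is represented by its frame of opens, a type 'a.\<close>

definition frame :: "('a::complete_lattice) itself \<Rightarrow> bool" where
  "frame _ \<longleftrightarrow> (\<forall>(x::'a) Y. inf x (Sup Y) = Sup ((\<lambda>y. inf x y) ` Y))"

text \<open>A presheaf of sets on the frame: sections of F(u) are the elements of
  carrier u; res u v s is the restriction s|_v for v \<le> u.\<close>

definition presheaf :: "('a::complete_lattice \<Rightarrow> 's set) \<Rightarrow> ('a \<Rightarrow> 'a \<Rightarrow> 's \<Rightarrow> 's) \<Rightarrow> bool" where
  "presheaf F res \<longleftrightarrow>
     (\<forall>u v s. v \<le> u \<longrightarrow> s \<in> F u \<longrightarrow> res u v s \<in> F v) \<and>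
     (\<forall>u s. s \<in> F u \<longrightarrow> res u u s = s) \<and>
     (\<forall>u v w s. w \<le> v \<longrightarrow> v \<le> u \<longrightarrow> s \<in> F u \<longrightarrow> res v w (res u v s) = res u w s)"

definition sheaf :: "('a::complete_lattice \<Rightarrow> 's set) \<Rightarrow> ('a \<Rightarrow> 'a \<Rightarrow> 's \<Rightarrow> 's) \<Rightarrow> bool" where
  "sheaf F res \<longleftrightarrow> presheaf F res \<and>
     (\<forall>(U::'a set) (t::'a \<Rightarrow> 's).
        (\<forall>a\<in>U. t a \<in> F a) \<longrightarrow>
        (\<forall>a\<in>U. \<forall>b\<in>U. res a (inf a b) (t a) = res b (inf a b) (t b)) \<longrightarrow>
        (\<exists>!s. s \<in> F (Sup U) \<and> (\<forall>a\<in>U. res (Sup U) a s = t a)))"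

definition posheaf :: "('a::complete_lattice \<Rightarrow> 's set) \<Rightarrow> ('a \<Rightarrow> 'a \<Rightarrow> 's \<Rightarrow> 's)
                        \<Rightarrow> ('a \<Rightarrow> 's \<Rightarrow> 's \<Rightarrow> bool) \<Rightarrow> bool" where
  "posheaf F res le \<longleftrightarrow> sheaf F res \<and>
     (\<forall>u. (\<forall>x\<in>F u. le u x x) \<and>
          (\<forall>x\<in>F u. \<forall>y\<in>F u. le u x y \<longrightarrow> le u y x \<longrightarrow> x = y) \<and>
          (\<forall>x\<in>F u. \<forall>y\<in>F u. \<forall>z\<in>F u. le u x y \<longrightarrow> le u y z \<longrightarrow> le u x z)) \<and>
     (\<forall>u v x y. v \<le> u \<longrightarrow> x \<in> F u \<longrightarrow> y \<in> F u \<longrightarrow> le u x y \<longrightarrow> le v (res u v x) (res u v y)) \<and>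
     (\<forall>(U::'a set) s t. s \<in> F (Sup U) \<longrightarrow> t \<in> F (Sup U) \<longrightarrow>
        (\<forall>a\<in>U. le a (res (Sup U) a s) (res (Sup U) a t)) \<longrightarrow> le (Sup U) s t)"

definition is_left_adjoint :: "('a::complete_lattice \<Rightarrow> 's set) \<Rightarrow> ('a \<Rightarrow> 'a \<Rightarrow> 's \<Rightarrow> 's)
        \<Rightarrow> ('a \<Rightarrow> 's \<Rightarrow> 's \<Rightarrow> bool) \<Rightarrow> 'a \<Rightarrow> 'a \<Rightarrow> ('s \<Rightarrow> 's) \<Rightarrow> bool" where
  "is_left_adjoint F res le v u lv \<longleftrightarrow>
     (\<forall>x\<in>F v. lv x \<in> F u) \<and>
     (\<forall>x\<in>F v. \<forall>x'\<in>F v. le v x x' \<longrightarrow> le u (lv x) (lv x')) \<and>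
     (\<forall>x\<in>F v. \<forall>y\<in>F u. le u (lv x) y \<longleftrightarrow> le v x (res u v y))"

end

theory Submission
  imports Defs
begin

lemma p1: "posheaf F res le \<Longrightarrow> sheaf F res" unfolding posheaf_def by (elim conjE)
lemma p2: "posheaf F res le \<Longrightarrow> z \<in> F u \<Longrightarrow> le u z z"
  unfolding posheaf_def by (drule conjunct2, drule conjunct1) blast
lemma p3: "posheaf F res le \<Longrightarrow> y \<in> F u \<Longrightarrow> z \<in> F u \<Longrightarrow> le u y z \<Longrightarrow> le u z y \<Longrightarrow> y = z"
  unfolding posheaf_def by (drule conjunct2, drule conjunct1) blast
lemma p4: "posheaf F res le \<Longrightarrow> v \<le> u \<Longrightarrow> y \<in> F u \<Longrightarrow> z \<in> F u \<Longrightarrow> le u y z \<Longrightarrow> le v (res u v y) (res u v z)"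
  unfolding posheaf_def by (drule conjunct2, drule conjunct2, drule conjunct1) blast
lemma s1: "sheaf F res \<Longrightarrow> presheaf F res" unfolding sheaf_def by (elim conjE)
lemma q1: "presheaf F res \<Longrightarrow> v \<le> u \<Longrightarrow> s \<in> F u \<Longrightarrow> res u v s \<in> F v" unfolding presheaf_def by blast
lemma q2: "presheaf F res \<Longrightarrow> s \<in> F u \<Longrightarrow> res u u s = s" unfolding presheaf_def by blast
lemma q3: "presheaf F res \<Longrightarrow> w \<le> v \<Longrightarrow> v \<le> u \<Longrightarrow> s \<in> F u \<Longrightarrow> res v w (res u v s) = res u w s" unfolding presheaf_def by blast
lemma a1: "is_left_adjoint F res le v u lv \<Longrightarrow> x\<in>F v \<Longrightarrow> lv x \<in> F u" unfolding is_left_adjoint_def by blast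
lemma a2: "is_left_adjoint F res le v u lv \<Longrightarrow> x\<in>F v \<Longrightarrow> y\<in>F u \<Longrightarrow> le u (lv x) y \<longleftrightarrow> le v x (res u v y)" unfolding is_left_adjoint_def by blast
lemma g: "sheaf F res \<Longrightarrow> \<forall>a\<in>U. t a \<in> F a \<Longrightarrow> \<forall>a\<in>U. \<forall>b\<in>U. res a (inf a b) (t a) = res b (inf a b) (t b) \<Longrightarrow> \<exists>s. s \<in> F (Sup U) \<and> (\<forall>a\<in>U. res (Sup U) a s = t a)"
  unfolding sheaf_def by (drule conjunct2) blast
lemma unit_eq:
  assumes P: "posheaf F res le"
    and surj: "\<And>u v. v \<le> u \<Longrightarrow> res u v ` F u = F v"
    and adj: "\<And>u v. v \<le> u \<Longrightarrow> is_left_adjoint F res le v u (l v u)"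
    and vw: "v \<le> w" and x: "x \<in> F v"
  shows "res w v (l v w x) = x"
proof -
  have pre: "presheaf F res" using s1[OF p1[OF P]] .
  have A: "is_left_adjoint F res le v w (l v w)" using adj vw by blast
  from surj[OF vw] x obtain y where y: "y \<in> F w" "x = res w v y" by blast
  have lx: "l v w x \<in> F w" using a1[OF A x] .
  have rl: "res w v (l v w x) \<in> F v" using q1[OF pre vw lx] .
  have 1: "le w (l v w x) y" using a2[OF A x y(1)] y(2) p2[OF P x] by simp
  have 2: "le v (res w v (l v w x)) x" using p4[OF P vw lx y(1) 1] y(2) by simp
  have 3: "le v x (res w v (l v w x))" using a2[OF A x lx] p2[OF P lx] by simp
  show ?thesis using p3[OF P rl x 2 3] .
qed

theorem lemma3p1:
  fixes F :: "'a::complete_lattice \<Rightarrow> 's set"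
    and res :: "'a \<Rightarrow> 'a \<Rightarrow> 's \<Rightarrow> 's"
    and le :: "'a \<Rightarrow> 's \<Rightarrow> 's \<Rightarrow> bool"
    and l :: "'a \<Rightarrow> 'a \<Rightarrow> 's \<Rightarrow> 's"
  assumes "frame TYPE('a)"
    and P: "posheaf F res le"
    and surj: "\<And>u v. v \<le> u \<Longrightarrow> res u v ` F u = F v"
    and adj: "\<And>u v. v \<le> u \<Longrightarrow> is_left_adjoint F res le v u (l v u)"
    and x: "x \<in> F v"
  shows "res (sup u v) u (l v (sup u v) x) = l (inf u v) u (res v (inf u v) x)"
proof -
  define w where "w = sup u v"
  define m where "m = inf u v"
  have sh: "sheaf F res" using p1[OF P] .
  have pre: "presheaf F res" using s1[OF sh] .
  have mu: "m \<le> u" and mv: "m \<le> v" and uw: "u \<le> w" and vw: "v \<le> w" by (auto simp: m_def w_def)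
  have Aw: "is_left_adjoint F res le v w (l v w)" using adj vw by blast
  have Am: "is_left_adjoint F res le m u (l m u)" using adj mu by blast
  have xm: "res v m x \<in> F m" using q1[OF pre mv x] .
  define B where "B = l m u (res v m x)"
  have B: "B \<in> F u" using a1[OF Am xm] unfolding B_def .
  have lx: "l v w x \<in> F w" using a1[OF Aw x] .
  define A where "A = res w u (l v w x)"
  have AF: "A \<in> F u" using q1[OF pre uw lx] A_def by simp
  have ux: "res w v (l v w x) = x" using unit_eq[OF P surj adj vw x] .
  have uB: "res u m B = res v m x" using unit_eq[OF P surj adj mu xm] B_def by simp
  have "res u m A = res v m x"
    using q3[OF pre mu uw lx] q3[OF pre mv vw lx] ux A_def by simp
  hence BA: "le u B A" using a2[OF Am xm AF] p2[OF P xm] unfolding B_def by simp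
  have uvB: "B = x" if uv: "u = v"
  proof -
    have Avv: "is_left_adjoint F res le v v (l v v)" using adj by blast
    have "m = v" using uv by (simp add: m_def)
    hence "B = l v v x" using B_def q2[OF pre x] uv by simp
    also have "\<dots> = res v v (l v v x)" using q2[OF pre a1[OF Avv x]] by simp
    also have "\<dots> = x" using unit_eq[OF P surj adj _ x] by simp
    finally show "B = x" .
  qed
  define t where "t = (\<lambda>a. if a = v then x else B)"
  have tF: "\<forall>a\<in>{u,v}. t a \<in> F a" using x B t_def by auto
  have comp: "\<forall>a\<in>{u,v}. \<forall>b\<in>{u,v}. res a (inf a b) (t a) = res b (inf a b) (t b)"
    using uB m_def t_def by (auto simp: inf_commute)
  from g[OF sh tF comp] obtain y where y: "y \<in> F (Sup {u,v})" "\<forall>a\<in>{u,v}. res (Sup {u,v}) a y = t a"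
    by blast
  have yw: "y \<in> F w" and yv: "res w v y = x" and yu: "res w u y = B"
    using y uvB by (auto simp: w_def t_def)
  have "le v x (res w v y)" using yv p2[OF P x] by simp
  hence "le w (l v w x) y" using a2[OF Aw x yw] by simp
  hence AB: "le u A B" using p4[OF P uw lx yw] yu A_def by simp
  show ?thesis using p3[OF P AF B AB BA] A_def B_def w_def m_def by simp
qed

end
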